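(* Let $K$ be a field, $E$ a directed graph, and $L=L_K(E)$. Let $c$ and $d$ be distinct cycles in $E$ (that is, $c$ and $d$ have distinct sets of edges), neither of which has an exit, and let $f(x),g(x)\in K[x]$ be polynomials with nonzero constant terms. Then $\langle f(c)\rangle\langle g(d)\rangle=0$.
   Context: A directed graph $E=(E^0,E^1,r,s)$ has vertex set $E^0\neq\emptyset$, edge set $E^1$, and range and source maps $r,s:E^1\to E^0$ (no cardinality restrictions). A path is a finite sequence $e_1\cdots e_n$ of edges with $r(e_i)=s(e_{i+1})$. A cycle is a path $e_1\cdots e_n$ with $r(e_n)=s(e_1)$ and $s(e_i)\neq s(e_j)$ for $i\neq j$. An exit of a path $e_1\cdots e_n$ is an edge $f\notin\{e_1,\dots,e_n\}$ with $s(f)=s(e_i)$ for some $i$. The Leavitt path algebra $L_K(E)$ is the $K$-algebra generated by $\{v:v\in E^0\}\cup\{e,e^*:e\in E^1\}$ subject to: $vw=\delta_{v,w}v$; $s(e)e=er(e)=e$; $r(e)e^*=e^*s(e)=e^*$; $e^*f=\delta_{e,f}r(e)$ for $e,f\in E^1$; and $v=\sum_{e\in s^{-1}(v)}ee^*$ whenever $s^{-1}(v)$ is finite and nonempty. For a path $\mu=e_1\cdots e_n$, $\mu$ is also viewed as the product $e_1\cdots e_n\in L_K(E)$. For a cycle $c$ based at $v$ and $f(x)=\sum_{i=0}^n k_ix^i\in K[x]$, $f(c):=k_0v+\sum_{i=1}^n k_ic^i$. $\langle X\rangle$ denotes the two-sided ideal generated by $X$. *)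

theory Defs
  imports Main "HOL-Computational_Algebra.Polynomial"
begin

record ('a, 'k) kalg =
  kcar  :: "'a set"
  kadd  :: "'a \<Rightarrow> 'a \<Rightarrow> 'a"
  kmul  :: "'a \<Rightarrow> 'a \<Rightarrow> 'a"
  kzero :: "'a"
  ksmul :: "'k \<Rightarrow> 'a \<Rightarrow> 'a"

definition is_ideal :: "('a, 'k) kalg \<Rightarrow> 'a set \<Rightarrow> bool" where
  "is_ideal A J \<longleftrightarrow> J \<subseteq> kcar A \<and> kzero A \<in> J
     \<and> (\<forall>x\<in>J. \<forall>y\<in>J. kadd A x y \<in> J)
     \<and> (\<forall>k. \<forall>x\<in>J. ksmul A k x \<in> J)
     \<and> (\<forall>a\<in>kcar A. \<forall>x\<in>J. kmul A a x \<in> J \<and> kmul A x a \<in> J)"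

definition gen_ideal :: "('a, 'k) kalg \<Rightarrow> 'a set \<Rightarrow> 'a set" where
  "gen_ideal A X = \<Inter>{J. is_ideal A J \<and> X \<subseteq> J}"

definition is_subspace :: "('a, 'k) kalg \<Rightarrow> 'a set \<Rightarrow> bool" where
  "is_subspace A S \<longleftrightarrow> S \<subseteq> kcar A \<and> kzero A \<in> S
     \<and> (\<forall>x\<in>S. \<forall>y\<in>S. kadd A x y \<in> S) \<and> (\<forall>k. \<forall>x\<in>S. ksmul A k x \<in> S)"

definition ideal_product :: "('a, 'k) kalg \<Rightarrow> 'a set \<Rightarrow> 'a set \<Rightarrow> 'a set" where
  "ideal_product A I J = \<Inter>{S. is_subspace A S \<and> {kmul A i j | i j. i \<in> I \<and> j \<in> J} \<subseteq> S}"

datatype ('v, 'e) lgen = V 'v | Ed 'e | Gh 'e  \<comment> \<open>v, e, e*\<close>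

type_synonym ('v, 'e, 'k) fel = "('v, 'e) lgen list \<Rightarrow> 'k"

text \<open>Elements of the free (non-unital) algebra: finitely supported coefficient
  functions on nonempty words.\<close>
definition fcar :: "('v, 'e, 'k::field) fel set" where
  "fcar = {p. finite {w. p w \<noteq> 0} \<and> p [] = 0}"

definition fadd :: "('v, 'e, 'k::field) fel \<Rightarrow> ('v, 'e, 'k) fel \<Rightarrow> ('v, 'e, 'k) fel" where
  "fadd p q = (\<lambda>w. p w + q w)"

definition fsub :: "('v, 'e, 'k::field) fel \<Rightarrow> ('v, 'e, 'k) fel \<Rightarrow> ('v, 'e, 'k) fel" where
  "fsub p q = (\<lambda>w. p w - q w)"

definition fsmul :: "'k::field \<Rightarrow> ('v, 'e, 'k) fel \<Rightarrow> ('v, 'e, 'k) fel" where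
  "fsmul k p = (\<lambda>w. k * p w)"

definition fmul :: "('v, 'e, 'k::field) fel \<Rightarrow> ('v, 'e, 'k) fel \<Rightarrow> ('v, 'e, 'k) fel" where
  "fmul p q = (\<lambda>w. \<Sum>i\<le>length w. p (take i w) * q (drop i w))"

definition fzero :: "('v, 'e, 'k::field) fel" where
  "fzero = (\<lambda>w. 0)"

definition mono :: "('v, 'e) lgen list \<Rightarrow> ('v, 'e, 'k::field) fel" where
  "mono u = (\<lambda>w. if w = u then 1 else 0)"

definition FA :: "(('v, 'e, 'k::field) fel, 'k) kalg" where
  "FA = \<lparr> kcar = fcar, kadd = fadd, kmul = fmul, kzero = fzero, ksmul = fsmul \<rparr>"

abbreviation gv :: "'v \<Rightarrow> ('v, 'e, 'k::field) fel" where "gv v \<equiv> mono [V v]"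
abbreviation ge :: "'e \<Rightarrow> ('v, 'e, 'k::field) fel" where "ge e \<equiv> mono [Ed e]"
abbreviation gs :: "'e \<Rightarrow> ('v, 'e, 'k::field) fel" where "gs e \<equiv> mono [Gh e]"

section \<open>Leavitt path algebra of the graph E = (UNIV::'v set, UNIV::'e set, r, s)\<close>

definition leavitt_rels :: "('e \<Rightarrow> 'v) \<Rightarrow> ('e \<Rightarrow> 'v) \<Rightarrow> ('v, 'e, 'k::field) fel set" where
  "leavitt_rels r s =
     {fsub (fmul (gv v) (gv w)) (if v = w then gv v else fzero) | v w. True}
   \<union> {fsub (fmul (gv (s e)) (ge e)) (ge e) | e. True}
   \<union> {fsub (fmul (ge e) (gv (r e))) (ge e) | e. True}
   \<union> {fsub (fmul (gv (r e)) (gs e)) (gs e) | e. True}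
   \<union> {fsub (fmul (gs e) (gv (s e))) (gs e) | e. True}
   \<union> {fsub (fmul (gs e) (ge f)) (if e = f then gv (r e) else fzero) | e f. True}
   \<union> {fsub (gv v) (\<lambda>w. \<Sum>e\<in>{e. s e = v}. fmul (ge e) (gs e) w) | v.
        finite {e. s e = v} \<and> {e. s e = v} \<noteq> {}}"

definition leavitt_ideal :: "('e \<Rightarrow> 'v) \<Rightarrow> ('e \<Rightarrow> 'v) \<Rightarrow> ('v, 'e, 'k::field) fel set" where
  "leavitt_ideal r s = gen_ideal FA (leavitt_rels r s)"

definition lcls :: "('e \<Rightarrow> 'v) \<Rightarrow> ('e \<Rightarrow> 'v) \<Rightarrow> ('v, 'e, 'k::field) fel \<Rightarrow> ('v, 'e, 'k) fel set" where
  "lcls r s x = {y \<in> fcar. fsub y x \<in> leavitt_ideal r s}"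

definition lrep :: "('v, 'e, 'k::field) fel set \<Rightarrow> ('v, 'e, 'k) fel" where
  "lrep X = (SOME x. x \<in> X)"

definition LPA :: "('e \<Rightarrow> 'v) \<Rightarrow> ('e \<Rightarrow> 'v) \<Rightarrow> (('v, 'e, 'k::field) fel set, 'k) kalg" where
  "LPA r s = \<lparr> kcar = lcls r s ` fcar,
      kadd = (\<lambda>X Y. lcls r s (fadd (lrep X) (lrep Y))),
      kmul = (\<lambda>X Y. lcls r s (fmul (lrep X) (lrep Y))),
      kzero = lcls r s fzero,
      ksmul = (\<lambda>k X. lcls r s (fsmul k (lrep X))) \<rparr>"

definition is_path :: "('e \<Rightarrow> 'v) \<Rightarrow> ('e \<Rightarrow> 'v) \<Rightarrow> 'e list \<Rightarrow> bool" where
  "is_path r s p \<longleftrightarrow> p \<noteq> [] \<and> (\<forall>i. Suc i < length p \<longrightarrow> r (p ! i) = s (p ! Suc i))"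

definition is_cycle :: "('e \<Rightarrow> 'v) \<Rightarrow> ('e \<Rightarrow> 'v) \<Rightarrow> 'e list \<Rightarrow> bool" where
  "is_cycle r s p \<longleftrightarrow> is_path r s p \<and> r (last p) = s (hd p) \<and> distinct (map s p)"

definition has_exit :: "('e \<Rightarrow> 'v) \<Rightarrow> 'e list \<Rightarrow> bool" where
  "has_exit s p \<longleftrightarrow> (\<exists>f. f \<notin> set p \<and> (\<exists>i<length p. s f = s (p ! i)))"

text \<open>f(c) = k_0 v + sum_{i>=1} k_i c^i in the free algebra, v = s(first edge of c).\<close>
definition poly_cycle :: "('e \<Rightarrow> 'v) \<Rightarrow> 'k::field poly \<Rightarrow> 'e list \<Rightarrow> ('v, 'e, 'k) fel" where
  "poly_cycle s f c = (\<lambda>w. (if w = [V (s (hd c))] then coeff f 0 else 0)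
      + (\<Sum>i\<in>{1..degree f}. if w = concat (replicate i (map Ed c)) then coeff f i else 0))"

end

theory Submission
  imports Defs
begin

definition splits :: "'a list \<Rightarrow> ('a list \<times> 'a list) set" where
 "splits w = {(u,v). u @ v = w}"

lemma splits_eq: "splits w = (\<lambda>i. (take i w, drop i w)) ` {..length w}"
proof (rule set_eqI)
  fix x :: "'a list \<times> 'a list"
  obtain u v where x: "x = (u,v)" by (cases x)
  show "x \<in> splits w \<longleftrightarrow> x \<in> (\<lambda>i. (take i w, drop i w)) ` {..length w}"
  proof
    assume "x \<in> splits w"
    then have "u @ v = w" by (simp add: splits_def x)
    then show "x \<in> (\<lambda>i. (take i w, drop i w)) ` {..length w}"
      unfolding x by (intro image_eqI[where x="length u"]) auto
  next
    assume "x \<in> (\<lambda>i. (take i w, drop i w)) ` {..length w}"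
    then show "x \<in> splits w" by (auto simp: splits_def)
  qed
qed

lemma finite_splits: "finite (splits w)" by (simp add: splits_eq)

lemma fmul_split: "fmul a b w = (\<Sum>(u,v)\<in>splits w. a u * b v)"
proof -
  have inj: "inj_on (\<lambda>i. (take i w, drop i w)) {..length w}"
  proof (rule inj_onI)
    fix i j assume "i \<in> {..length w}" "j \<in> {..length w}" "(take i w, drop i w) = (take j w, drop j w)"
    then have "length (take i w) = length (take j w)" "i \<le> length w" "j \<le> length w" by auto
    then show "i = j" by simp
  qed
  show ?thesis unfolding fmul_def splits_eq sum.reindex[OF inj] by simp
qed

definition trips :: "'a list \<Rightarrow> ('a list \<times> 'a list \<times> 'a list) set" where
 "trips w = {(u,v,z). u @ v @ z = w}"

lemma fmul_assoc: "fmul (fmul a b) c = fmul a (fmul b c)"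
proof (rule ext)
  fix w
  have fin: "\<And>x. finite (splits x)" by (rule finite_splits)
  have "fmul (fmul a b) c w = (\<Sum>p\<in>splits w. (\<Sum>q\<in>splits (fst p). a (fst q) * b (snd q)) * c (snd p))"
    by (simp add: fmul_split case_prod_unfold)
  also have "\<dots> = (\<Sum>p\<in>splits w. (\<Sum>q\<in>splits (fst p). a (fst q) * b (snd q) * c (snd p)))"
    by (simp add: sum_distrib_right)
  also have "\<dots> = (\<Sum>(p,q)\<in>Sigma (splits w) (\<lambda>p. splits (fst p)). a (fst q) * b (snd q) * c (snd p))"
    by (rule sum.Sigma) (auto simp: fin)
  also have "\<dots> = (\<Sum>t\<in>trips w. a (fst t) * b (fst (snd t)) * c (snd (snd t)))"
    by (rule sum.reindex_bij_witness[where i="\<lambda>t. ((fst t @ fst (snd t), snd (snd t)), (fst t, fst (snd t)))" and j="\<lambda>pq. (fst (snd pq), snd (snd pq), snd (fst pq))"]) (force simp: splits_def trips_def)+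
  finally have L: "fmul (fmul a b) c w = (\<Sum>t\<in>trips w. a (fst t) * b (fst (snd t)) * c (snd (snd t)))" .
  have "fmul a (fmul b c) w = (\<Sum>p\<in>splits w. a (fst p) * (\<Sum>q\<in>splits (snd p). b (fst q) * c (snd q)))"
    by (simp add: fmul_split case_prod_unfold)
  also have "\<dots> = (\<Sum>p\<in>splits w. (\<Sum>q\<in>splits (snd p). a (fst p) * b (fst q) * c (snd q)))"
    by (simp add: sum_distrib_left mult.assoc)
  also have "\<dots> = (\<Sum>(p,q)\<in>Sigma (splits w) (\<lambda>p. splits (snd p)). a (fst p) * b (fst q) * c (snd q))"
    by (rule sum.Sigma) (auto simp: fin)
  also have "\<dots> = (\<Sum>t\<in>trips w. a (fst t) * b (fst (snd t)) * c (snd (snd t)))"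
    by (rule sum.reindex_bij_witness[where i="\<lambda>t. ((fst t, fst (snd t) @ snd (snd t)), (fst (snd t), snd (snd t)))" and j="\<lambda>pq. (fst (fst pq), fst (snd pq), snd (snd pq))"]) (force simp: splits_def trips_def)+
  finally show "fmul (fmul a b) c w = fmul a (fmul b c) w" using L by simp
qed

lemma fmul_fadd_left: "fmul (fadd a b) c = fadd (fmul a c) (fmul b c)"
  by (rule ext) (simp add: fmul_def fadd_def distrib_right sum.distrib)
lemma fmul_fadd_right: "fmul c (fadd a b) = fadd (fmul c a) (fmul c b)"
  by (rule ext) (simp add: fmul_def fadd_def distrib_left sum.distrib)
lemma fmul_fsub_left: "fmul (fsub a b) c = fsub (fmul a c) (fmul b c)"
  by (rule ext) (simp add: fmul_def fsub_def left_diff_distrib sum_subtractf)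
lemma fmul_fsub_right: "fmul c (fsub a b) = fsub (fmul c a) (fmul c b)"
  by (rule ext) (simp add: fmul_def fsub_def right_diff_distrib sum_subtractf)
lemma fmul_fsmul_left: "fmul (fsmul k a) b = fsmul k (fmul a b)"
  by (rule ext) (simp add: fmul_def fsmul_def sum_distrib_left mult.assoc)
lemma fmul_fsmul_right: "fmul a (fsmul k b) = fsmul k (fmul a b)"
  by (rule ext) (simp add: fmul_def fsmul_def sum_distrib_left mult.left_commute)

lemma fmul_mono: "fmul (mono p) (mono q) = mono (p @ q)"
proof (rule ext)
  fix w
  have "fmul (mono p) (mono q) w = (\<Sum>x\<in>splits w. if x = (p,q) then 1 else 0)"
    unfolding fmul_split
  proof (rule sum.cong)
    fix x assume "x \<in> splits w"
    obtain u v where x: "x = (u,v)" by (cases x)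
    show "(case x of (u, v) \<Rightarrow> mono p u * mono q v) = (if x = (p,q) then 1 else 0)"
      unfolding x by (simp add: Defs.mono_def)
  qed simp
  also have "\<dots> = mono (p @ q) w"
    by (subst sum.delta[OF finite_splits]) (auto simp: splits_def Defs.mono_def)
  finally show "fmul (mono p) (mono q) w = mono (p @ q) w" .
qed

lemma fmul_Nil_left: "fmul (mono []) x = x"
proof (rule ext)
  fix w
  have "fmul (mono []) x w = (\<Sum>y\<in>splits w. if y = ([],w) then x w else 0)"
    unfolding fmul_split
  proof (rule sum.cong)
    fix y assume "y \<in> splits w"
    obtain u v where y: "y = (u,v)" by (cases y)
    show "(case y of (u, v) \<Rightarrow> mono [] u * x v) = (if y = ([],w) then x w else 0)"
      using \<open>y \<in> splits w\<close> unfolding y by (auto simp: Defs.mono_def splits_def)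
  qed simp
  also have "\<dots> = x w" by (subst sum.delta[OF finite_splits]) (simp add: splits_def)
  finally show "fmul (mono []) x w = x w" .
qed

lemma fmul_Nil_right: "fmul x (mono []) = x"
proof (rule ext)
  fix w
  have "fmul x (mono []) w = (\<Sum>y\<in>splits w. if y = (w,[]) then x w else 0)"
    unfolding fmul_split
  proof (rule sum.cong)
    fix y assume "y \<in> splits w"
    obtain u v where y: "y = (u,v)" by (cases y)
    show "(case y of (u, v) \<Rightarrow> x u * mono [] v) = (if y = (w,[]) then x w else 0)"
      using \<open>y \<in> splits w\<close> unfolding y by (auto simp: Defs.mono_def splits_def)
  qed simp
  also have "\<dots> = x w" by (subst sum.delta[OF finite_splits]) (simp add: splits_def)
  finally show "fmul x (mono []) w = x w" .
qed

lemma fcar_fadd: "a \<in> fcar \<Longrightarrow> b \<in> fcar \<Longrightarrow> fadd a b \<in> fcar"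
proof -
  assume a: "a \<in> fcar" and b: "b \<in> fcar"
  have "{w. fadd a b w \<noteq> 0} \<subseteq> {w. a w \<noteq> 0} \<union> {w. b w \<noteq> 0}" by (auto simp: fadd_def)
  then show ?thesis using a b unfolding fcar_def by (auto intro: finite_subset simp: fadd_def)
qed

lemma fcar_fsmul: "a \<in> fcar \<Longrightarrow> fsmul k a \<in> fcar"
proof -
  assume a: "a \<in> fcar"
  have "{w. fsmul k a w \<noteq> 0} \<subseteq> {w. a w \<noteq> 0}" by (auto simp: fsmul_def)
  then show ?thesis using a unfolding fcar_def by (auto intro: finite_subset simp: fsmul_def)
qed

lemma fsub_eq: "fsub a b = fadd a (fsmul (-1) b)"
  by (rule ext) (simp add: fsub_def fadd_def fsmul_def)

lemma fcar_fsub: "a \<in> fcar \<Longrightarrow> b \<in> fcar \<Longrightarrow> fsub a b \<in> fcar"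
  by (simp add: fsub_eq fcar_fadd fcar_fsmul)

lemma fzero_fcar: "fzero \<in> fcar" by (simp add: fcar_def fzero_def)

lemma mono_fcar: "p \<noteq> [] \<Longrightarrow> mono p \<in> fcar"
proof -
  assume p: "p \<noteq> []"
  have "{w. (mono p :: ('a,'b,'k::field) fel) w \<noteq> 0} \<subseteq> {p}" by (auto simp: Defs.mono_def split: if_splits)
  then show "mono p \<in> fcar" using p unfolding fcar_def by (auto intro: finite_subset simp: Defs.mono_def)
qed

lemma fcar_fmul: "a \<in> fcar \<Longrightarrow> b \<in> fcar \<Longrightarrow> fmul a b \<in> fcar"
proof -
  assume a: "a \<in> fcar" and b: "b \<in> fcar"
  have "{w. fmul a b w \<noteq> 0} \<subseteq> (\<lambda>(u,v). u @ v) ` ({u. a u \<noteq> 0} \<times> {v. b v \<noteq> 0})"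
  proof
    fix w assume "w \<in> {w. fmul a b w \<noteq> 0}"
    then have "(\<Sum>(u,v)\<in>splits w. a u * b v) \<noteq> 0" by (simp add: fmul_split)
    then obtain x where x: "x \<in> splits w" "(case x of (u,v) \<Rightarrow> a u * b v) \<noteq> 0"
      by (rule sum.not_neutral_contains_not_neutral)
    obtain u v where "x = (u,v)" by (cases x)
    with x have "(u,v) \<in> splits w" "a u * b v \<noteq> 0" by auto
    then show "w \<in> (\<lambda>(u,v). u @ v) ` ({u. a u \<noteq> 0} \<times> {v. b v \<noteq> 0})"
      by (force simp: splits_def)
  qed
  moreover have "finite ((\<lambda>(u,v). u @ v) ` ({u. a u \<noteq> 0} \<times> {v. b v \<noteq> 0}))"
    using a b by (simp add: fcar_def)
  ultimately show ?thesis using a b unfolding fcar_def by (auto intro: finite_subset simp: fmul_def)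
qed

lemma fmul_lin_left: "fmul (\<lambda>w. \<Sum>i\<in>A. k i * h i w) b = (\<lambda>w. \<Sum>i\<in>A. k i * fmul (h i) b w)"
  by (rule ext) (simp add: fmul_def sum_distrib_left sum_distrib_right mult.assoc sum.swap[where A=A])

lemma fmul_lin_right: "fmul b (\<lambda>w. \<Sum>i\<in>A. k i * h i w) = (\<lambda>w. \<Sum>i\<in>A. k i * fmul b (h i) w)"
  by (rule ext) (simp add: fmul_def sum_distrib_left sum_distrib_right mult.left_commute sum.swap[where A=A])

lemma fcar_expand: "a \<in> fcar \<Longrightarrow> a = (\<lambda>w. \<Sum>i\<in>{w. a w \<noteq> 0}. a i * mono i w)"
proof (rule ext)
  fix w assume a: "a \<in> fcar"
  have "(\<Sum>i\<in>{w. a w \<noteq> 0}. a i * mono i w) = (\<Sum>i\<in>{w. a w \<noteq> 0}. if i = w then a w else 0)"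
    by (rule sum.cong) (auto simp: Defs.mono_def split: if_splits)
  also have "\<dots> = a w" using a by (simp add: sum.delta' fcar_def)
  finally show "a w = (\<Sum>i\<in>{w. a w \<noteq> 0}. a i * mono i w)" by simp
qed

lemma lin_fcar: "finite A \<Longrightarrow> (\<forall>i\<in>A. h i \<in> fcar) \<Longrightarrow> (\<lambda>w. \<Sum>i\<in>A. k i * h i w) \<in> fcar"
proof (induction A rule: finite_induct)
  case empty then show ?case using fzero_fcar by (simp add: fzero_def)
next
  case (insert i A)
  have "(\<lambda>w. \<Sum>i\<in>insert i A. k i * h i w) = fadd (fsmul (k i) (h i)) (\<lambda>w. \<Sum>i\<in>A. k i * h i w)"
    using insert by (simp add: fadd_def fsmul_def)
  then show ?case using insert by (simp add: fcar_fadd fcar_fsmul)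
qed

lemma LI_zero: "fzero \<in> leavitt_ideal r s"
  unfolding leavitt_ideal_def gen_ideal_def is_ideal_def FA_def by auto
lemma LI_add: "x \<in> leavitt_ideal r s \<Longrightarrow> y \<in> leavitt_ideal r s \<Longrightarrow> fadd x y \<in> leavitt_ideal r s"
  unfolding leavitt_ideal_def gen_ideal_def is_ideal_def FA_def by auto
lemma LI_smul: "x \<in> leavitt_ideal r s \<Longrightarrow> fsmul k x \<in> leavitt_ideal r s"
  unfolding leavitt_ideal_def gen_ideal_def is_ideal_def FA_def by auto
lemma LI_mull: "a \<in> fcar \<Longrightarrow> x \<in> leavitt_ideal r s \<Longrightarrow> fmul a x \<in> leavitt_ideal r s"
  unfolding leavitt_ideal_def gen_ideal_def is_ideal_def FA_def by auto
lemma LI_mulr: "a \<in> fcar \<Longrightarrow> x \<in> leavitt_ideal r s \<Longrightarrow> fmul x a \<in> leavitt_ideal r s"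
  unfolding leavitt_ideal_def gen_ideal_def is_ideal_def FA_def by auto
lemma LI_rels: "x \<in> leavitt_rels r s \<Longrightarrow> x \<in> leavitt_ideal r s"
  unfolding leavitt_ideal_def gen_ideal_def by auto
lemma LI_sub: "x \<in> leavitt_ideal r s \<Longrightarrow> y \<in> leavitt_ideal r s \<Longrightarrow> fsub x y \<in> leavitt_ideal r s"
  by (simp add: fsub_eq LI_add LI_smul)

lemma LI_lin: "finite A \<Longrightarrow> (\<forall>i\<in>A. h i \<in> leavitt_ideal r s) \<Longrightarrow> (\<lambda>w. \<Sum>i\<in>A. k i * h i w) \<in> leavitt_ideal r s"
proof (induction A rule: finite_induct)
  case empty then show ?case using LI_zero by (simp add: fzero_def)
next
  case (insert i A)
  have "(\<lambda>w. \<Sum>i\<in>insert i A. k i * h i w) = fadd (fsmul (k i) (h i)) (\<lambda>w. \<Sum>i\<in>A. k i * h i w)"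
    using insert by (simp add: fadd_def fsmul_def)
  then show ?case using insert by (simp add: LI_add LI_smul)
qed

lemma LI_ctx: "z \<in> leavitt_ideal r s \<Longrightarrow> fmul (mono p) (fmul z (mono q)) \<in> leavitt_ideal r s"
  by (cases "p = []"; cases "q = []") (auto simp: fmul_Nil_left fmul_Nil_right mono_fcar LI_mull LI_mulr)

definition eqv :: "('e \<Rightarrow> 'v) \<Rightarrow> ('e \<Rightarrow> 'v) \<Rightarrow> ('v, 'e, 'k::field) fel \<Rightarrow> ('v, 'e, 'k) fel \<Rightarrow> bool" where
  "eqv r s a b \<longleftrightarrow> fsub a b \<in> leavitt_ideal r s"

lemma eqv_refl: "eqv r s a a"
proof -
  have "fsub a a = fzero" by (rule ext) (simp add: fsub_def fzero_def)
  then show ?thesis by (simp add: eqv_def LI_zero)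
qed
lemma eqv_sym: "eqv r s a b \<Longrightarrow> eqv r s b a"
proof -
  assume "eqv r s a b"
  moreover have "fsub b a = fsmul (-1) (fsub a b)" by (rule ext) (simp add: fsub_def fsmul_def)
  ultimately show ?thesis by (simp add: eqv_def LI_smul)
qed
lemma eqv_trans: "eqv r s a b \<Longrightarrow> eqv r s b c \<Longrightarrow> eqv r s a c"
proof -
  assume "eqv r s a b" "eqv r s b c"
  moreover have "fsub a c = fadd (fsub a b) (fsub b c)" by (rule ext) (simp add: fsub_def fadd_def)
  ultimately show ?thesis by (simp add: eqv_def LI_add)
qed
lemma eqv_LI: "eqv r s a b \<Longrightarrow> b \<in> leavitt_ideal r s \<Longrightarrow> a \<in> leavitt_ideal r s"
proof -
  assume "eqv r s a b" "b \<in> leavitt_ideal r s"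
  moreover have "a = fadd (fsub a b) b" by (rule ext) (simp add: fsub_def fadd_def)
  ultimately show ?thesis by (metis eqv_def LI_add)
qed
lemma eqv_ctx: "eqv r s a b \<Longrightarrow> eqv r s (fmul (mono p) (fmul a (mono q))) (fmul (mono p) (fmul b (mono q)))"
  unfolding eqv_def using LI_ctx[of "fsub a b" r s p q] by (simp add: fmul_fsub_left fmul_fsub_right)

lemma mono3: "fmul (mono p) (fmul (mono l) (mono q)) = mono (p @ l @ q)"
  by (simp add: fmul_mono)

lemma eqv_word:
  fixes l l' p q W1 W2 :: "('v,'e) lgen list" and r s :: "'e \<Rightarrow> 'v"
  assumes "W1 = p @ l @ q" "W2 = p @ l' @ q" "eqv r s (mono l :: ('v,'e,'k::field) fel) (mono l')"
  shows "eqv r s (mono W1 :: ('v,'e,'k) fel) (mono W2)"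
proof -
  have "eqv r s (fmul (mono p) (fmul (mono l) (mono q)) :: ('v,'e,'k) fel) (fmul (mono p) (fmul (mono l') (mono q)))"
    by (rule eqv_ctx) (rule assms(3))
  then show ?thesis using assms by (simp add: fmul_mono)
qed

lemma LI_word:
  fixes l p q W1 :: "('v,'e) lgen list" and r s :: "'e \<Rightarrow> 'v"
  assumes "W1 = p @ l @ q" "(mono l :: ('v,'e,'k::field) fel) \<in> leavitt_ideal r s"
  shows "(mono W1 :: ('v,'e,'k) fel) \<in> leavitt_ideal r s"
proof -
  have "(fmul (mono p) (fmul (mono l) (mono q)) :: ('v,'e,'k) fel) \<in> leavitt_ideal r s"
    by (rule LI_ctx) (rule assms(2))
  then show ?thesis using assms by (simp add: fmul_mono)
qed

lemma fsub_fzero: "fsub x fzero = x" by (rule ext) (simp add: fsub_def fzero_def)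

lemma rel_VV: "eqv r s (mono [V v, V v] :: ('v,'e,'k::field) fel) (mono [V v])"
proof -
  have "fsub (fmul (gv v) (gv v)) (if v = v then gv v else fzero) \<in> (leavitt_rels r s :: ('v,'e,'k) fel set)"
    unfolding leavitt_rels_def by blast
  then show ?thesis by (simp add: eqv_def fmul_mono LI_rels)
qed
lemma rel_VV0: "v \<noteq> w \<Longrightarrow> (mono [V v, V w] :: ('v,'e,'k::field) fel) \<in> leavitt_ideal r s"
proof -
  assume "v \<noteq> w"
  have "fsub (fmul (gv v) (gv w)) (if v = w then gv v else fzero) \<in> (leavitt_rels r s :: ('v,'e,'k) fel set)"
    unfolding leavitt_rels_def by blast
  then show ?thesis using \<open>v \<noteq> w\<close> by (simp add: fmul_mono LI_rels fsub_fzero)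
qed
lemma rel_sE: "eqv r s (mono [V (s e), Ed e] :: ('v,'e,'k::field) fel) (mono [Ed e])"
proof -
  have "fsub (fmul (gv (s e)) (ge e)) (ge e) \<in> (leavitt_rels r s :: ('v,'e,'k) fel set)"
    unfolding leavitt_rels_def by blast
  then show ?thesis by (simp add: eqv_def fmul_mono LI_rels)
qed
lemma rel_Er: "eqv r s (mono [Ed e, V (r e)] :: ('v,'e,'k::field) fel) (mono [Ed e])"
proof -
  have "fsub (fmul (ge e) (gv (r e))) (ge e) \<in> (leavitt_rels r s :: ('v,'e,'k) fel set)"
    unfolding leavitt_rels_def by blast
  then show ?thesis by (simp add: eqv_def fmul_mono LI_rels)
qed
lemma rel_rG: "eqv r s (mono [V (r e), Gh e] :: ('v,'e,'k::field) fel) (mono [Gh e])"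
proof -
  have "fsub (fmul (gv (r e)) (gs e)) (gs e) \<in> (leavitt_rels r s :: ('v,'e,'k) fel set)"
    unfolding leavitt_rels_def by blast
  then show ?thesis by (simp add: eqv_def fmul_mono LI_rels)
qed
lemma rel_Gs: "eqv r s (mono [Gh e, V (s e)] :: ('v,'e,'k::field) fel) (mono [Gh e])"
proof -
  have "fsub (fmul (gs e) (gv (s e))) (gs e) \<in> (leavitt_rels r s :: ('v,'e,'k) fel set)"
    unfolding leavitt_rels_def by blast
  then show ?thesis by (simp add: eqv_def fmul_mono LI_rels)
qed
lemma rel_GE: "eqv r s (mono [Gh e, Ed e] :: ('v,'e,'k::field) fel) (mono [V (r e)])"
proof -
  have "fsub (fmul (gs e) (ge e)) (if e = e then gv (r e) else fzero) \<in> (leavitt_rels r s :: ('v,'e,'k) fel set)"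
    unfolding leavitt_rels_def by blast
  then show ?thesis by (simp add: eqv_def fmul_mono LI_rels)
qed
lemma rel_GE0: "e \<noteq> f \<Longrightarrow> (mono [Gh e, Ed f] :: ('v,'e,'k::field) fel) \<in> leavitt_ideal r s"
proof -
  assume "e \<noteq> f"
  have "fsub (fmul (gs e) (ge f)) (if e = f then gv (r e) else fzero) \<in> (leavitt_rels r s :: ('v,'e,'k) fel set)"
    unfolding leavitt_rels_def by blast
  then show ?thesis using \<open>e \<noteq> f\<close> by (simp add: fmul_mono LI_rels fsub_fzero)
qed

lemma VE0: "y \<noteq> s f \<Longrightarrow> mono [V y, Ed f] \<in> leavitt_ideal r s"
proof -
  assume a: "y \<noteq> s f"
  have "eqv r s (mono [V y, Ed f]) (mono [V y, V (s f), Ed f])"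
    by (rule eqv_word[where p="[V y]" and q="[]", OF _ _ eqv_sym[OF rel_sE]]) auto
  moreover have "mono [V y, V (s f), Ed f] \<in> leavitt_ideal r s"
    by (rule LI_word[where p="[]" and q="[Ed f]", OF _ rel_VV0[OF a]]) auto
  ultimately show ?thesis by (rule eqv_LI)
qed
lemma VG0: "y \<noteq> r f \<Longrightarrow> mono [V y, Gh f] \<in> leavitt_ideal r s"
proof -
  assume a: "y \<noteq> r f"
  have "eqv r s (mono [V y, Gh f]) (mono [V y, V (r f), Gh f])"
    by (rule eqv_word[where p="[V y]" and q="[]", OF _ _ eqv_sym[OF rel_rG]]) auto
  moreover have "mono [V y, V (r f), Gh f] \<in> leavitt_ideal r s"
    by (rule LI_word[where p="[]" and q="[Gh f]", OF _ rel_VV0[OF a]]) auto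
  ultimately show ?thesis by (rule eqv_LI)
qed
lemma GV0: "y \<noteq> s e \<Longrightarrow> mono [Gh e, V y] \<in> leavitt_ideal r s"
proof -
  assume a: "y \<noteq> s e"
  have "eqv r s (mono [Gh e, V y]) (mono [Gh e, V (s e), V y])"
    by (rule eqv_word[where p="[]" and q="[V y]", OF _ _ eqv_sym[OF rel_Gs]]) auto
  moreover have "mono [Gh e, V (s e), V y] \<in> leavitt_ideal r s"
    by (rule LI_word[where p="[Gh e]" and q="[]", OF _ rel_VV0[of "s e" y]]) (use a in auto)
  ultimately show ?thesis by (rule eqv_LI)
qed
lemma GG0: "s e \<noteq> r f \<Longrightarrow> mono [Gh e, Gh f] \<in> leavitt_ideal r s"
proof -
  assume a: "s e \<noteq> r f"
  have "eqv r s (mono [Gh e, Gh f]) (mono [Gh e, V (s e), Gh f])"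
    by (rule eqv_word[where p="[]" and q="[Gh f]", OF _ _ eqv_sym[OF rel_Gs]]) auto
  moreover have "mono [Gh e, V (s e), Gh f] \<in> leavitt_ideal r s"
    by (rule LI_word[where p="[Gh e]" and q="[]", OF _ VG0[of "s e" r f, OF a]]) auto
  ultimately show ?thesis by (rule eqv_LI)
qed

fun epath :: "('e \<Rightarrow> 'v) \<Rightarrow> ('e \<Rightarrow> 'v) \<Rightarrow> 'v \<Rightarrow> 'e list \<Rightarrow> 'v \<Rightarrow> bool" where
  "epath r s x [] z = (x = z)"
| "epath r s x (e # a) z = (s e = x \<and> epath r s (r e) a z)"

fun gpath :: "('e \<Rightarrow> 'v) \<Rightarrow> ('e \<Rightarrow> 'v) \<Rightarrow> 'v \<Rightarrow> 'e list \<Rightarrow> 'v \<Rightarrow> bool" where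
  "gpath r s z [] y = (z = y)"
| "gpath r s z (e # b) y = (r e = z \<and> gpath r s (s e) b y)"

lemma epath_snoc: "epath r s x (a @ [f]) z' \<longleftrightarrow> (\<exists>z. epath r s x a z \<and> s f = z \<and> z' = r f)"
  by (induction a arbitrary: x) auto
lemma gpath_snoc: "gpath r s z (b @ [f]) y' \<longleftrightarrow> (\<exists>y. gpath r s z b y \<and> r f = y \<and> y' = s f)"
  by (induction b arbitrary: z) auto

definition nfw :: "'e list \<Rightarrow> 'v \<Rightarrow> 'e list \<Rightarrow> ('v,'e) lgen list" where
  "nfw a z b = map Ed a @ [V z] @ map Gh b"

lemma V_end:
  fixes r s :: "'e \<Rightarrow> 'v"
  assumes "gpath r s z b y"
  shows "eqv r s (mono (nfw a z b @ [V y]) :: ('v,'e,'k::field) fel) (mono (nfw a z b))"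
proof (cases b rule: rev_exhaust)
  case Nil
  then have "y = z" using assms by simp
  show ?thesis
    by (rule eqv_word[where p="map Ed a" and q="[]", OF _ _ rel_VV[where v=z]]) (auto simp: nfw_def Nil \<open>y = z\<close>)
next
  case (snoc b0 e)
  then have "y = s e" using assms by (auto simp: gpath_snoc)
  show ?thesis
    by (rule eqv_word[where p="map Ed a @ [V z] @ map Gh b0" and q="[]", OF _ _ rel_Gs[where e=e]]) (auto simp: nfw_def snoc \<open>y = s e\<close>)
qed

lemma V_ne:
  fixes r s :: "'e \<Rightarrow> 'v"
  assumes "gpath r s z b y" "y' \<noteq> y"
  shows "(mono (nfw a z b @ [V y']) :: ('v,'e,'k::field) fel) \<in> leavitt_ideal r s"
proof (cases b rule: rev_exhaust)
  case Nil
  then have "y = z" using assms by simp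
  show ?thesis
    by (rule LI_word[where p="map Ed a" and q="[]", OF _ rel_VV0[of z y']]) (use assms \<open>y = z\<close> in \<open>auto simp: nfw_def Nil\<close>)
next
  case (snoc b0 e)
  then have "y = s e" using assms by (auto simp: gpath_snoc)
  show ?thesis
    by (rule LI_word[where p="map Ed a @ [V z] @ map Gh b0" and q="[]", OF _ GV0[of y' s e]]) (use assms \<open>y = s e\<close> in \<open>auto simp: nfw_def snoc\<close>)
qed

lemma G_bad:
  fixes r s :: "'e \<Rightarrow> 'v"
  assumes "gpath r s z b y" "r f \<noteq> y"
  shows "(mono (nfw a z b @ [Gh f]) :: ('v,'e,'k::field) fel) \<in> leavitt_ideal r s"
proof (cases b rule: rev_exhaust)
  case Nil
  then have "y = z" using assms by simp
  show ?thesis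
    by (rule LI_word[where p="map Ed a" and q="[]", OF _ VG0[of z r f]]) (use assms \<open>y = z\<close> in \<open>auto simp: nfw_def Nil\<close>)
next
  case (snoc b0 e)
  then have "y = s e" using assms by (auto simp: gpath_snoc)
  show ?thesis
    by (rule LI_word[where p="map Ed a @ [V z] @ map Gh b0" and q="[]", OF _ GG0[of s e r f]]) (use assms \<open>y = s e\<close> in \<open>auto simp: nfw_def snoc\<close>)
qed

lemma E_nil_bad:
  fixes r s :: "'e \<Rightarrow> 'v"
  assumes "s f \<noteq> z"
  shows "(mono (nfw a z [] @ [Ed f]) :: ('v,'e,'k::field) fel) \<in> leavitt_ideal r s"
  by (rule LI_word[where p="map Ed a" and q="[]", OF _ VE0[of z s f]]) (use assms in \<open>auto simp: nfw_def\<close>)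

lemma E_nil_ok:
  fixes r s :: "'e \<Rightarrow> 'v"
  assumes "s f = z"
  shows "eqv r s (mono (nfw a z [] @ [Ed f]) :: ('v,'e,'k::field) fel) (mono (nfw (a @ [f]) (r f) []))"
proof -
  have 1: "eqv r s (mono (nfw a z [] @ [Ed f]) :: ('v,'e,'k::field) fel) (mono (map Ed a @ [Ed f]))"
    by (rule eqv_word[where p="map Ed a" and q="[]", OF _ _ rel_sE[where e=f]]) (use assms in \<open>auto simp: nfw_def\<close>)
  have 2: "eqv r s (mono (map Ed a @ [Ed f]) :: ('v,'e,'k::field) fel) (mono (nfw (a @ [f]) (r f) []))"
    by (rule eqv_word[where p="map Ed a" and q="[]", OF _ _ eqv_sym[OF rel_Er[where e=f]]]) (auto simp: nfw_def)
  show ?thesis by (rule eqv_trans[OF 1 2])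
qed

lemma E_snoc_bad:
  fixes r s :: "'e \<Rightarrow> 'v"
  assumes "e \<noteq> f"
  shows "(mono (nfw a z (b0 @ [e]) @ [Ed f]) :: ('v,'e,'k::field) fel) \<in> leavitt_ideal r s"
  by (rule LI_word[where p="map Ed a @ [V z] @ map Gh b0" and q="[]", OF _ rel_GE0[of e f]]) (use assms in \<open>auto simp: nfw_def\<close>)

lemma E_snoc_ok:
  fixes r s :: "'e \<Rightarrow> 'v"
  assumes "gpath r s z (b0 @ [e]) y"
  shows "eqv r s (mono (nfw a z (b0 @ [e]) @ [Ed e]) :: ('v,'e,'k::field) fel) (mono (nfw a z b0))"
proof -
  have g: "gpath r s z b0 (r e)" using assms by (auto simp: gpath_snoc)
  have 1: "eqv r s (mono (nfw a z (b0 @ [e]) @ [Ed e]) :: ('v,'e,'k::field) fel) (mono (nfw a z b0 @ [V (r e)]))"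
    by (rule eqv_word[where p="map Ed a @ [V z] @ map Gh b0" and q="[]", OF _ _ rel_GE[where e=e]]) (auto simp: nfw_def)
  show ?thesis by (rule eqv_trans[OF 1 V_end[OF g]])
qed

lemma NF:
  fixes r s :: "'e \<Rightarrow> 'v"
  shows "(mono (V x # w) :: ('v,'e,'k::field) fel) \<in> leavitt_ideal r s \<or>
    (\<exists>a z b y. epath r s x a z \<and> gpath r s z b y \<and> eqv r s (mono (V x # w) :: ('v,'e,'k) fel) (mono (nfw a z b)))"
proof (induction w rule: rev_induct)
  case Nil
  have "epath r s x [] x" "gpath r s x [] x" by simp_all
  moreover have "eqv r s (mono [V x] :: ('v,'e,'k) fel) (mono (nfw [] x []))"
    using eqv_refl by (simp add: nfw_def)
  ultimately show ?case by blast
next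
  case (snoc g w)
  show ?case
  proof (cases "(mono (V x # w) :: ('v,'e,'k) fel) \<in> leavitt_ideal r s")
    case True
    have "(mono (V x # w @ [g]) :: ('v,'e,'k) fel) \<in> leavitt_ideal r s"
      by (rule LI_word[where p="[]" and q="[g]", OF _ True]) simp
    then show ?thesis by simp
  next
    case False
    with snoc.IH obtain a z b y where ab: "epath r s x a z" "gpath r s z b y"
      and eq: "eqv r s (mono (V x # w) :: ('v,'e,'k) fel) (mono (nfw a z b))" by blast
    have eq2: "eqv r s (mono (V x # w @ [g]) :: ('v,'e,'k) fel) (mono (nfw a z b @ [g]))"
      by (rule eqv_word[where p="[]" and q="[g]", OF _ _ eq]) simp_all
    show ?thesis
    proof (cases g)
      case (V y')
      show ?thesis
      proof (cases "y' = y")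
        case True
        have "eqv r s (mono (V x # w @ [g]) :: ('v,'e,'k) fel) (mono (nfw a z b))"
          using eqv_trans[OF eq2[unfolded V True] V_end[OF ab(2)]] V True by simp
        then show ?thesis using ab by auto
      next
        case False
        have "(mono (nfw a z b @ [g]) :: ('v,'e,'k) fel) \<in> leavitt_ideal r s"
          using V_ne[OF ab(2) False] V by simp
        then show ?thesis using eqv_LI[OF eq2] by simp
      qed
    next
      case (Gh f)
      show ?thesis
      proof (cases "r f = y")
        case True
        have "nfw a z b @ [g] = nfw a z (b @ [f])" using Gh by (simp add: nfw_def)
        moreover have "gpath r s z (b @ [f]) (s f)" using ab(2) True by (simp add: gpath_snoc)
        ultimately show ?thesis using eq2 ab(1) by auto
      next
        case False
        have "(mono (nfw a z b @ [g]) :: ('v,'e,'k) fel) \<in> leavitt_ideal r s"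
          using G_bad[OF ab(2) False] Gh by simp
        then show ?thesis using eqv_LI[OF eq2] by simp
      qed
    next
      case (Ed f)
      show ?thesis
      proof (cases b rule: rev_exhaust)
        case Nil
        show ?thesis
        proof (cases "s f = z")
          case True
          have "epath r s x (a @ [f]) (r f)" using ab(1) True by (auto simp: epath_snoc)
          moreover have "gpath r s (r f) [] (r f)" by simp
          moreover have "eqv r s (mono (V x # w @ [g]) :: ('v,'e,'k) fel) (mono (nfw (a @ [f]) (r f) []))"
            using eqv_trans[OF eq2[unfolded Nil Ed] E_nil_ok[where s=s and f=f and z=z and a=a and r=r, OF True]] Ed by simp
          ultimately show ?thesis by blast
        next
          case False
          have "(mono (nfw a z b @ [g]) :: ('v,'e,'k) fel) \<in> leavitt_ideal r s"
            using E_nil_bad[where s=s and f=f and z=z and a=a and r=r, OF False] Ed Nil by simp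
          then show ?thesis using eqv_LI[OF eq2] by simp
        qed
      next
        case (snoc b0 e)
        show ?thesis
        proof (cases "e = f")
          case True
          have "gpath r s z b0 (r e)" using ab(2) snoc by (auto simp: gpath_snoc)
          moreover have "eqv r s (mono (V x # w @ [g]) :: ('v,'e,'k) fel) (mono (nfw a z b0))"
            using eqv_trans[OF eq2[unfolded snoc Ed True[symmetric]] E_snoc_ok[OF ab(2)[unfolded snoc]]] Ed True by simp
          ultimately show ?thesis using ab(1) by blast
        next
          case False
          have "(mono (nfw a z b @ [g]) :: ('v,'e,'k) fel) \<in> leavitt_ideal r s"
            using E_snoc_bad[OF False] Ed snoc by simp
          then show ?thesis using eqv_LI[OF eq2] by simp
        qed
      qed
    qed
  qed
qed

lemma epath_closed: "epath r s x a z \<Longrightarrow> x \<in> S \<Longrightarrow> (\<forall>e. s e \<in> S \<longrightarrow> r e \<in> S) \<Longrightarrow> z \<in> S"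
  by (induction a arbitrary: x) auto
lemma gpath_closed: "gpath r s z b y \<Longrightarrow> y \<in> T \<Longrightarrow> (\<forall>e. s e \<in> T \<longrightarrow> r e \<in> T) \<Longrightarrow> z \<in> T"
  by (induction b arbitrary: z) auto

lemma K_word:
  fixes r s :: "'e \<Rightarrow> 'v"
  assumes cS: "\<forall>e. s e \<in> S \<longrightarrow> r e \<in> S" and cT: "\<forall>e. s e \<in> T \<longrightarrow> r e \<in> T"
    and ST: "S \<inter> T = {}" and x: "x \<in> S" and u: "u \<in> T"
  shows "(mono (V x # w @ [V u]) :: ('v,'e,'k::field) fel) \<in> leavitt_ideal r s"
proof -
  from NF[of x w r s]
  consider "(mono (V x # w) :: ('v,'e,'k) fel) \<in> leavitt_ideal r s"
    | a z b y where "epath r s x a z" "gpath r s z b y" "eqv r s (mono (V x # w) :: ('v,'e,'k) fel) (mono (nfw a z b))"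
    by blast
  then show ?thesis
  proof cases
    case 1
    show ?thesis by (rule LI_word[where p="[]" and q="[V u]", OF _ 1]) simp
  next
    case (2 a z b y)
    have eq2: "eqv r s (mono (V x # w @ [V u]) :: ('v,'e,'k) fel) (mono (nfw a z b @ [V u]))"
      by (rule eqv_word[where p="[]" and q="[V u]", OF _ _ 2(3)]) simp_all
    have "u \<noteq> y"
    proof
      assume "u = y"
      then have "z \<in> T" using gpath_closed[OF 2(2) _ cT] u by simp
      moreover have "z \<in> S" using epath_closed[OF 2(1) x cS] .
      ultimately show False using ST by blast
    qed
    then show ?thesis using eqv_LI[OF eq2 V_ne[OF 2(2)]] by simp
  qed
qed

lemma kcar_LPA: "kcar (LPA r s) = lcls r s ` fcar" by (simp add: LPA_def)

lemma lcls_self: "x \<in> fcar \<Longrightarrow> x \<in> lcls r s x"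
  using eqv_refl[of r s x] by (simp add: lcls_def eqv_def)

lemma lrep_in: "X \<in> kcar (LPA r s) \<Longrightarrow> lrep X \<in> X \<and> lrep X \<in> fcar"
proof -
  assume "X \<in> kcar (LPA r s)"
  then obtain x where x: "x \<in> fcar" "X = lcls r s x" by (auto simp: kcar_LPA)
  then have "x \<in> X" by (simp add: lcls_self)
  then have "lrep X \<in> X" unfolding lrep_def by (rule someI[where P="\<lambda>x. x \<in> X"])
  then show ?thesis using x by (simp add: lcls_def)
qed

lemma lcls_eq: "a \<in> fcar \<Longrightarrow> b \<in> fcar \<Longrightarrow> fsub a b \<in> leavitt_ideal r s \<Longrightarrow> lcls r s a = lcls r s b"
  unfolding lcls_def using eqv_trans eqv_sym unfolding eqv_def by blast

lemma fadd_fsub: "y = fadd t (fsub y t)" by (rule ext) (simp add: fadd_def fsub_def)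

definition goodset :: "('e \<Rightarrow> 'v) \<Rightarrow> ('e \<Rightarrow> 'v) \<Rightarrow> ('v, 'e, 'k::field) fel set \<Rightarrow> bool" where
  "goodset r s P \<longleftrightarrow> P \<subseteq> fcar
     \<and> (\<forall>t\<in>P. \<forall>y\<in>fcar. fsub y t \<in> leavitt_ideal r s \<longrightarrow> y \<in> P)
     \<and> (fcar \<inter> leavitt_ideal r s \<subseteq> P)
     \<and> (\<forall>a\<in>P. \<forall>b\<in>P. fadd a b \<in> P)
     \<and> (\<forall>k. \<forall>a\<in>P. fsmul k a \<in> P)
     \<and> (\<forall>z\<in>fcar. \<forall>a\<in>P. fmul z a \<in> P \<and> fmul a z \<in> P)"

lemma goodset_lcls: "goodset r s P \<Longrightarrow> t \<in> P \<Longrightarrow> lcls r s t \<subseteq> P"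
  unfolding goodset_def lcls_def by blast

lemma goodset_ideal:
  fixes r s :: "'e \<Rightarrow> 'v" and P :: "('v,'e,'k::field) fel set"
  assumes g: "goodset r s P"
  shows "is_ideal (LPA r s) {X \<in> kcar (LPA r s). X \<subseteq> P}"
proof -
  have PF: "P \<subseteq> fcar" using g by (simp add: goodset_def)
  have zero: "kzero (LPA r s) \<in> {X \<in> kcar (LPA r s). X \<subseteq> P}"
  proof -
    have "lcls r s (fzero :: ('v,'e,'k) fel) \<subseteq> P"
    proof
      fix y :: "('v,'e,'k) fel" assume "y \<in> lcls r s fzero"
      then have "y \<in> fcar" "y \<in> leavitt_ideal r s" by (auto simp: lcls_def fsub_fzero)
      then show "y \<in> P" using g by (auto simp: goodset_def)
    qed
    then show ?thesis by (simp add: LPA_def fzero_fcar)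
  qed
  have rep: "\<And>X. X \<in> {X \<in> kcar (LPA r s). X \<subseteq> P} \<Longrightarrow> lrep X \<in> P \<and> lrep X \<in> fcar"
    using lrep_in by blast
  have cl: "\<And>t. t \<in> P \<Longrightarrow> lcls r s t \<in> {X \<in> kcar (LPA r s). X \<subseteq> P}"
    using goodset_lcls[OF g] PF by (auto simp: kcar_LPA)
  show ?thesis unfolding is_ideal_def
  proof (intro conjI ballI allI)
    show "{X \<in> kcar (LPA r s). X \<subseteq> P} \<subseteq> kcar (LPA r s)" by blast
    show "kzero (LPA r s) \<in> {X \<in> kcar (LPA r s). X \<subseteq> P}" by (rule zero)
  next
    fix X Y assume "X \<in> {X \<in> kcar (LPA r s). X \<subseteq> P}" "Y \<in> {X \<in> kcar (LPA r s). X \<subseteq> P}"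
    then have "fadd (lrep X) (lrep Y) \<in> P" using rep g by (auto simp: goodset_def)
    then show "kadd (LPA r s) X Y \<in> {X \<in> kcar (LPA r s). X \<subseteq> P}" using cl by (simp add: LPA_def)
  next
    fix k X assume "X \<in> {X \<in> kcar (LPA r s). X \<subseteq> P}"
    then have "fsmul k (lrep X) \<in> P" using rep g by (auto simp: goodset_def)
    then show "ksmul (LPA r s) k X \<in> {X \<in> kcar (LPA r s). X \<subseteq> P}" using cl by (simp add: LPA_def)
  next
    fix Z X :: "('v,'e,'k) fel set" assume Z: "Z \<in> kcar (LPA r s)" and X: "X \<in> {X \<in> kcar (LPA r s). X \<subseteq> P}"
    have "lrep Z \<in> fcar" using lrep_in[OF Z] by simp
    then have "fmul (lrep Z) (lrep X) \<in> P"
      using rep[OF X] g by (auto simp: goodset_def)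
    then show "kmul (LPA r s) Z X \<in> {X \<in> kcar (LPA r s). X \<subseteq> P}"
      using cl by (simp add: LPA_def)
  next
    fix Z X :: "('v,'e,'k) fel set" assume Z: "Z \<in> kcar (LPA r s)" and X: "X \<in> {X \<in> kcar (LPA r s). X \<subseteq> P}"
    have "lrep Z \<in> fcar" using lrep_in[OF Z] by simp
    then have "fmul (lrep X) (lrep Z) \<in> P"
      using rep[OF X] g by (auto simp: goodset_def)
    then show "kmul (LPA r s) X Z \<in> {X \<in> kcar (LPA r s). X \<subseteq> P}"
      using cl by (simp add: LPA_def)
  qed
qed

lemma zero_subspace: "is_subspace (LPA r s :: (('v,'e,'k::field) fel set, 'k) kalg) {kzero (LPA r s)}"
proof -
  have Z: "kzero (LPA r s :: (('v,'e,'k) fel set, 'k) kalg) \<in> kcar (LPA r s :: (('v,'e,'k) fel set, 'k) kalg)" by (simp add: LPA_def fzero_fcar)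
  have rz: "lrep (kzero (LPA r s :: (('v,'e,'k) fel set, 'k) kalg)) \<in> fcar \<and> lrep (kzero (LPA r s :: (('v,'e,'k) fel set, 'k) kalg)) \<in> leavitt_ideal r s"
    using lrep_in[OF Z] by (simp add: LPA_def lcls_def fsub_fzero)
  have "lcls r s (fadd (lrep (kzero (LPA r s :: (('v,'e,'k) fel set, 'k) kalg))) (lrep (kzero (LPA r s :: (('v,'e,'k) fel set, 'k) kalg)))) = lcls r s fzero"
    using rz by (intro lcls_eq) (simp_all add: fcar_fadd fzero_fcar fsub_fzero LI_add)
  moreover have "\<And>k. lcls r s (fsmul k (lrep (kzero (LPA r s :: (('v,'e,'k) fel set, 'k) kalg)))) = lcls r s fzero"
    using rz by (intro lcls_eq) (simp_all add: fcar_fsmul fzero_fcar fsub_fzero LI_smul)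
  ultimately show ?thesis using Z unfolding is_subspace_def by (simp add: LPA_def)
qed

lemma abstract_main:
  fixes r s :: "'e \<Rightarrow> 'v" and p q :: "('v,'e,'k::field) fel"
  assumes K1: "\<forall>m\<in>fcar. (fmul (gv v) (fmul m (gv u)) :: ('v,'e,'k) fel) \<in> leavitt_ideal r s"
    and K0: "(fmul (gv v) (gv u) :: ('v,'e,'k) fel) \<in> leavitt_ideal r s"
    and p: "p \<in> fcar" "fsub p (fmul p (gv v)) \<in> leavitt_ideal r s"
    and q: "q \<in> fcar" "fsub q (fmul (gv u) q) \<in> leavitt_ideal r s"
  shows "ideal_product (LPA r s) (gen_ideal (LPA r s) {lcls r s p}) (gen_ideal (LPA r s) {lcls r s q})
         = {kzero (LPA r s)}"
proof -
  let ?I = "leavitt_ideal r s :: ('v,'e,'k) fel set"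
  have vF: "(gv v :: ('v,'e,'k) fel) \<in> fcar" "(gv u :: ('v,'e,'k) fel) \<in> fcar" by (simp_all add: mono_fcar)
  define N where "N = {b :: ('v,'e,'k) fel. b \<in> fcar \<and> fmul (gv v) b \<in> ?I \<and> (\<forall>m\<in>fcar. fmul (gv v) (fmul m b) \<in> ?I)}"
  define M where "M = {a :: ('v,'e,'k) fel. a \<in> fcar \<and> (\<forall>b\<in>N. fmul a b \<in> ?I)}"
  have gN: "goodset r s N" unfolding goodset_def
  proof (intro conjI ballI allI impI)
    show "N \<subseteq> fcar" by (auto simp: N_def)
  next
    fix t y assume t: "t \<in> N" and y: "y \<in> fcar" and d: "fsub y t \<in> ?I"
    have e1: "fmul (gv v) y = fadd (fmul (gv v) t) (fmul (gv v) (fsub y t))"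
      by (subst fadd_fsub[of y t]) (simp add: fmul_fadd_right)
    have e2: "\<And>m. fmul (gv v) (fmul m y) = fadd (fmul (gv v) (fmul m t)) (fmul (gv v) (fmul m (fsub y t)))"
      by (subst fadd_fsub[of y t]) (simp add: fmul_fadd_right)
    have t1: "fmul (gv v) t \<in> ?I" and t2: "\<And>m. m \<in> fcar \<Longrightarrow> fmul (gv v) (fmul m t) \<in> ?I"
      using t by (auto simp: N_def)
    have "fmul (gv v) y \<in> ?I" unfolding e1 by (rule LI_add[OF t1 LI_mull[OF vF(1) d]])
    moreover have "\<And>m. m \<in> fcar \<Longrightarrow> fmul (gv v) (fmul m y) \<in> ?I"
      unfolding e2 by (rule LI_add[OF t2 LI_mull[OF vF(1) LI_mull[OF _ d]]])
    ultimately show "y \<in> N" using y unfolding N_def by blast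
  next
    show "fcar \<inter> ?I \<subseteq> N" using vF unfolding N_def by (auto intro!: LI_mull)
  next
    fix a b assume "a \<in> N" "b \<in> N"
    then show "fadd a b \<in> N" unfolding N_def by (auto simp: fmul_fadd_right intro!: LI_add fcar_fadd)
  next
    fix k a assume "a \<in> N"
    then show "fsmul k a \<in> N" unfolding N_def by (auto simp: fmul_fsmul_right intro!: LI_smul fcar_fsmul)
  next
    fix z :: "('v,'e,'k) fel" and a assume z: "z \<in> fcar" and a: "a \<in> N"
    have a1: "a \<in> fcar" and a2: "\<And>m. m \<in> fcar \<Longrightarrow> fmul (gv v) (fmul m a) \<in> ?I"
      using a by (auto simp: N_def)
    have "\<And>m. m \<in> fcar \<Longrightarrow> fmul (gv v) (fmul m (fmul z a)) \<in> ?I"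
      using a2[OF fcar_fmul[OF _ z]] by (simp add: fmul_assoc)
    then show "fmul z a \<in> N" using a2[OF z] z a1 unfolding N_def
      by (auto intro!: fcar_fmul)
  next
    fix z :: "('v,'e,'k) fel" and a assume z: "z \<in> fcar" and a: "a \<in> N"
    have a0: "a \<in> fcar" "fmul (gv v) a \<in> ?I" and a2: "\<And>m. m \<in> fcar \<Longrightarrow> fmul (gv v) (fmul m a) \<in> ?I"
      using a by (auto simp: N_def)
    have "fmul (gv v) (fmul a z) = fmul (fmul (gv v) a) z" by (simp add: fmul_assoc)
    then have b1: "fmul (gv v) (fmul a z) \<in> ?I" using LI_mulr[OF z a0(2)] by simp
    have "\<And>m. fmul (gv v) (fmul m (fmul a z)) = fmul (fmul (gv v) (fmul m a)) z" by (simp add: fmul_assoc)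
    then have b2: "\<And>m. m \<in> fcar \<Longrightarrow> fmul (gv v) (fmul m (fmul a z)) \<in> ?I" using LI_mulr[OF z a2] by simp
    show "fmul a z \<in> N" using b1 b2 z a0 unfolding N_def
      by (auto intro!: fcar_fmul)
  qed
  have NF': "N \<subseteq> fcar" using gN by (simp add: goodset_def)
  have gM: "goodset r s M" unfolding goodset_def
  proof (intro conjI ballI allI impI)
    show "M \<subseteq> fcar" by (auto simp: M_def)
  next
    fix t y assume t: "t \<in> M" and y: "y \<in> fcar" and d: "fsub y t \<in> ?I"
    have "\<And>b. fmul y b = fadd (fmul t b) (fmul (fsub y t) b)"
      by (subst fadd_fsub[of y t]) (simp add: fmul_fadd_left)
    then have "\<And>b. b \<in> N \<Longrightarrow> fmul y b \<in> ?I"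
      using t NF' LI_add[OF _ LI_mulr[OF _ d]] unfolding M_def by auto
    then show "y \<in> M" using y unfolding M_def by blast
  next
    show "fcar \<inter> ?I \<subseteq> M" using NF' unfolding M_def by (auto intro!: LI_mulr)
  next
    fix a b assume "a \<in> M" "b \<in> M"
    then show "fadd a b \<in> M" unfolding M_def by (auto simp: fmul_fadd_left intro!: LI_add fcar_fadd)
  next
    fix k a assume "a \<in> M"
    then show "fsmul k a \<in> M" unfolding M_def by (auto simp: fmul_fsmul_left intro!: LI_smul fcar_fsmul)
  next
    fix z :: "('v,'e,'k) fel" and a assume z: "z \<in> fcar" and a: "a \<in> M"
    have "\<And>b. b \<in> N \<Longrightarrow> fmul (fmul z a) b \<in> ?I"
      using a LI_mull[OF z] unfolding M_def by (auto simp: fmul_assoc)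
    then show "fmul z a \<in> M" using z a unfolding M_def
      by (auto intro!: fcar_fmul)
  next
    fix z :: "('v,'e,'k) fel" and a assume z: "z \<in> fcar" and a: "a \<in> M"
    have "\<And>b. b \<in> N \<Longrightarrow> fmul z b \<in> N" using gN z by (simp add: goodset_def)
    then show "fmul a z \<in> M" using z a unfolding M_def
      by (auto simp: fmul_assoc intro!: fcar_fmul)
  qed
  have pM: "p \<in> M" unfolding M_def
  proof (intro CollectI conjI ballI)
    show "p \<in> fcar" by (rule p(1))
  next
    fix b assume b: "b \<in> N"
    have e: "fmul p b = fadd (fmul p (fmul (gv v) b)) (fmul (fsub p (fmul p (gv v))) b)"
      by (subst fadd_fsub[of p "fmul p (gv v)"]) (simp add: fmul_fadd_left fmul_assoc)
    have vb: "fmul (gv v) b \<in> ?I" and bF: "b \<in> fcar" using b by (auto simp: N_def)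
    show "fmul p b \<in> ?I" unfolding e by (rule LI_add[OF LI_mull[OF p(1) vb] LI_mulr[OF bF p(2)]])
  qed
  have qN: "q \<in> N" unfolding N_def
  proof (intro CollectI conjI ballI)
    show "q \<in> fcar" by (rule q(1))
  next
    have "fmul (gv v) q = fadd (fmul (fmul (gv v) (gv u)) q) (fmul (gv v) (fsub q (fmul (gv u) q)))"
      by (subst fadd_fsub[of q "fmul (gv u) q"]) (simp add: fmul_fadd_right fmul_assoc)
    then show "fmul (gv v) q \<in> ?I" using LI_add[OF LI_mulr[OF q(1) K0] LI_mull[OF vF(1) q(2)]] by simp
  next
    fix m :: "('v,'e,'k) fel" assume m: "m \<in> fcar"
    have "fmul (gv v) (fmul m q) = fadd (fmul (fmul (gv v) (fmul m (gv u))) q) (fmul (gv v) (fmul m (fsub q (fmul (gv u) q))))"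
      by (subst fadd_fsub[of q "fmul (gv u) q"]) (simp add: fmul_fadd_right fmul_assoc)
    moreover have "fmul (gv v) (fmul m (gv u)) \<in> ?I" using K1 m by blast
    ultimately show "fmul (gv v) (fmul m q) \<in> ?I" using LI_add[OF LI_mulr[OF q(1)] LI_mull[OF vF(1) LI_mull[OF m q(2)]]] by simp
  qed
  define I1 where "I1 = {X \<in> kcar (LPA r s). X \<subseteq> M}"
  define I2 where "I2 = {X \<in> kcar (LPA r s). X \<subseteq> N}"
  have "gen_ideal (LPA r s) {lcls r s p} \<subseteq> I1"
  proof -
    have "lcls r s p \<in> I1" using goodset_lcls[OF gM pM] p by (auto simp: I1_def kcar_LPA)
    then show ?thesis using goodset_ideal[OF gM] unfolding gen_ideal_def I1_def by blast
  qed
  moreover have "gen_ideal (LPA r s) {lcls r s q} \<subseteq> I2"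
  proof -
    have "lcls r s q \<in> I2" using goodset_lcls[OF gN qN] q by (auto simp: I2_def kcar_LPA)
    then show ?thesis using goodset_ideal[OF gN] unfolding gen_ideal_def I2_def by blast
  qed
  moreover have prod0: "\<And>X Y. X \<in> I1 \<Longrightarrow> Y \<in> I2 \<Longrightarrow> kmul (LPA r s) X Y = kzero (LPA r s)"
  proof -
    fix X Y assume X: "X \<in> I1" and Y: "Y \<in> I2"
    have "lrep X \<in> M" "lrep Y \<in> N" using lrep_in X Y unfolding I1_def I2_def by blast+
    then have "fmul (lrep X) (lrep Y) \<in> ?I" "fmul (lrep X) (lrep Y) \<in> fcar"
      using NF' unfolding M_def by (auto intro: fcar_fmul)
    then have "lcls r s (fmul (lrep X) (lrep Y)) = lcls r s fzero"
      by (intro lcls_eq) (simp_all add: fzero_fcar fsub_fzero)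
    then show "kmul (LPA r s) X Y = kzero (LPA r s)" by (simp add: LPA_def)
  qed
  ultimately have sub: "{kmul (LPA r s) i j | i j. i \<in> gen_ideal (LPA r s) {lcls r s p} \<and> j \<in> gen_ideal (LPA r s) {lcls r s q}} \<subseteq> {kzero (LPA r s)}"
    by blast
  show ?thesis
  proof
    show "ideal_product (LPA r s) (gen_ideal (LPA r s) {lcls r s p}) (gen_ideal (LPA r s) {lcls r s q}) \<subseteq> {kzero (LPA r s)}"
      unfolding ideal_product_def using zero_subspace sub by blast
    show "{kzero (LPA r s)} \<subseteq> ideal_product (LPA r s) (gen_ideal (LPA r s) {lcls r s p}) (gen_ideal (LPA r s) {lcls r s q})"
      unfolding ideal_product_def is_subspace_def by blast
  qed
qed

lemma K_lin:
  fixes r s :: "'e \<Rightarrow> 'v"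
  assumes cS: "\<forall>e. s e \<in> S \<longrightarrow> r e \<in> S" and cT: "\<forall>e. s e \<in> T \<longrightarrow> r e \<in> T"
    and ST: "S \<inter> T = {}" and x: "x \<in> S" and u: "u \<in> T"
  shows "\<forall>m\<in>fcar. (fmul (gv x) (fmul m (gv u)) :: ('v,'e,'k::field) fel) \<in> leavitt_ideal r s"
proof
  fix m :: "('v,'e,'k) fel" assume m: "m \<in> fcar"
  define A where "A = {w. m w \<noteq> 0}"
  have fA: "finite A" using m by (simp add: A_def fcar_def)
  have e: "m = (\<lambda>w. \<Sum>i\<in>A. m i * mono i w)" using fcar_expand[OF m] by (simp add: A_def)
  have "fmul (gv x) (fmul m (gv u)) = fmul (gv x) (fmul (\<lambda>w. \<Sum>i\<in>A. m i * mono i w) (gv u))"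
    using e by (rule arg_cong[where f="\<lambda>y. fmul (gv x) (fmul y (gv u))"])
  also have "\<dots> = (\<lambda>w. \<Sum>i\<in>A. m i * fmul (gv x) (fmul (mono i) (gv u)) w)"
    by (simp add: fmul_lin_left fmul_lin_right)
  also have "\<dots> \<in> leavitt_ideal r s"
  proof (rule LI_lin[OF fA], rule ballI)
    fix i assume "i \<in> A"
    have "(mono (V x # i @ [V u]) :: ('v,'e,'k) fel) \<in> leavitt_ideal r s"
      by (rule K_word[OF cS cT ST x u])
    then show "(fmul (gv x) (fmul (mono i) (gv u)) :: ('v,'e,'k) fel) \<in> leavitt_ideal r s" by (simp add: fmul_mono)
  qed
  finally show "fmul (gv x) (fmul m (gv u)) \<in> leavitt_ideal r s" .
qed

lemma K_0:
  fixes r s :: "'e \<Rightarrow> 'v"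
  assumes cS: "\<forall>e. s e \<in> S \<longrightarrow> r e \<in> S" and cT: "\<forall>e. s e \<in> T \<longrightarrow> r e \<in> T"
    and ST: "S \<inter> T = {}" and x: "x \<in> S" and u: "u \<in> T"
  shows "(fmul (gv x) (gv u) :: ('v,'e,'k::field) fel) \<in> leavitt_ideal r s"
  using K_word[OF cS cT ST x u, of "[]"] by (simp add: fmul_mono)

lemma noexit_in: "\<not> has_exit s c \<Longrightarrow> s e \<in> s ` set c \<Longrightarrow> e \<in> set c"
proof -
  assume a: "\<not> has_exit s c" "s e \<in> s ` set c"
  then obtain i where "i < length c" "s e = s (c ! i)" by (auto simp: in_set_conv_nth)
  then show "e \<in> set c" using a(1) unfolding has_exit_def by blast
qed

lemma cyc_next:
  assumes "is_cycle r s d" "m < length d"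
  shows "r (d ! m) = s (d ! (Suc m mod length d))"
proof (cases "Suc m < length d")
  case True
  then show ?thesis using assms by (simp add: is_cycle_def is_path_def)
next
  case False
  then have m: "Suc m = length d" using assms(2) by simp
  have ne: "d \<noteq> []" using assms by (simp add: is_cycle_def is_path_def)
  have "m = length d - 1" using m by simp
  then have "d ! m = last d" using ne by (simp add: last_conv_nth)
  moreover have "hd d = d ! 0" using ne by (simp add: hd_conv_nth)
  ultimately show ?thesis using assms m by (simp add: is_cycle_def)
qed

lemma cyc_r_in:
  assumes "is_cycle r s c" "e \<in> set c"
  shows "r e \<in> s ` set c"
proof -
  obtain m where m: "m < length c" "e = c ! m" using assms(2) by (auto simp: in_set_conv_nth)
  have "r e = s (c ! (Suc m mod length c))" using cyc_next[OF assms(1) m(1)] m by simp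
  moreover have "Suc m mod length c < length c" using m by (intro mod_less_divisor) linarith
  ultimately show ?thesis by auto
qed

lemma cyc_closed: "is_cycle r s c \<Longrightarrow> \<not> has_exit s c \<Longrightarrow> \<forall>e. s e \<in> s ` set c \<longrightarrow> r e \<in> s ` set c"
  using noexit_in cyc_r_in by metis

lemma cyc_sub:
  assumes c: "is_cycle r s c" "\<not> has_exit s c" and d: "is_cycle r s d"
    and y: "y \<in> s ` set d" "y \<in> s ` set c"
  shows "set d \<subseteq> set c"
proof -
  let ?n = "length d"
  obtain j where j: "j < ?n" "s (d ! j) = y" using y(1) by (auto simp: in_set_conv_nth)
  then have j2: "s (d ! j) \<in> s ` set c" using y(2) by simp
  have n: "?n > 0" using j by linarith
  have all: "s (d ! ((j + k) mod ?n)) \<in> s ` set c" for k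
  proof (induction k)
    case 0 then show ?case using j j2 by simp
  next
    case (Suc k)
    let ?m = "(j + k) mod ?n"
    have mlt: "?m < ?n" using n by simp
    have "r (d ! ?m) \<in> s ` set c" using cyc_closed[OF c] Suc by blast
    moreover have "r (d ! ?m) = s (d ! (Suc ?m mod ?n))" by (rule cyc_next[OF d mlt])
    moreover have "Suc ?m mod ?n = (j + Suc k) mod ?n" by (simp add: mod_Suc_eq)
    ultimately show ?case by simp
  qed
  show ?thesis
  proof
    fix e assume "e \<in> set d"
    then obtain i where i: "i < ?n" "e = d ! i" by (auto simp: in_set_conv_nth)
    have "(j + (?n - j + i)) mod ?n = i" using i j by simp
    then have "s e \<in> s ` set c" using all[of "?n - j + i"] i by simp
    then show "e \<in> set c" using noexit_in[OF c(2)] by blast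
  qed
qed

lemma cyc_disj:
  assumes "is_cycle r s c" "is_cycle r s d" "set c \<noteq> set d" "\<not> has_exit s c" "\<not> has_exit s d"
  shows "s ` set c \<inter> s ` set d = {}"
proof (rule ccontr)
  assume "s ` set c \<inter> s ` set d \<noteq> {}"
  then obtain y where "y \<in> s ` set c" "y \<in> s ` set d" by blast
  then have "set d \<subseteq> set c" "set c \<subseteq> set d"
    using cyc_sub[of r s c d y] cyc_sub[of r s d c y] assms by auto
  then show False using assms(3) by blast
qed

definition Wf :: "('e \<Rightarrow> 'v) \<Rightarrow> 'e list \<Rightarrow> nat \<Rightarrow> ('v,'e) lgen list" where
  "Wf s c i = (if i = 0 then [V (s (hd c))] else concat (replicate i (map Ed c)))"

lemma Wf_ne: "c \<noteq> [] \<Longrightarrow> Wf s c i \<noteq> []"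
  by (simp add: Wf_def)

lemma poly_lin: "poly_cycle s f c = (\<lambda>w. \<Sum>i\<in>{0..degree f}. coeff f i * mono (Wf s c i) w)"
proof (rule ext)
  fix w
  have "(\<Sum>i\<in>{0..degree f}. coeff f i * mono (Wf s c i) w)
      = coeff f 0 * mono (Wf s c 0) w + (\<Sum>i\<in>{Suc 0..degree f}. coeff f i * mono (Wf s c i) w)"
    by (rule sum.atLeast_Suc_atMost) simp
  also have "(\<Sum>i\<in>{Suc 0..degree f}. coeff f i * mono (Wf s c i) w)
      = (\<Sum>i\<in>{1..degree f}. if w = concat (replicate i (map Ed c)) then coeff f i else 0)"
    by (rule sum.cong) (auto simp: Wf_def Defs.mono_def)
  finally show "poly_cycle s f c w = (\<Sum>i\<in>{0..degree f}. coeff f i * mono (Wf s c i) w)"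
    by (simp add: poly_cycle_def Wf_def Defs.mono_def)
qed

lemma concat_rep_Suc: "concat (replicate (Suc k) xs) = concat (replicate k xs) @ xs"
  by (induction k) auto

lemma concat_rep_comm: "xs @ concat (replicate k xs) = concat (replicate k xs) @ xs"
  by (induction k) auto

lemma poly_fcar:
  assumes "c \<noteq> []"
  shows "(poly_cycle s f c :: ('v,'e,'k::field) fel) \<in> fcar"
  unfolding poly_lin by (rule lin_fcar) (auto intro!: mono_fcar Wf_ne assms)

lemma poly_right:
  fixes r s :: "'e \<Rightarrow> 'v" and f :: "'k::field poly"
  assumes ne: "c \<noteq> []" and cyc: "r (last c) = s (hd c)"
  shows "fsub (poly_cycle s f c) (fmul (poly_cycle s f c) (gv (s (hd c)))) \<in> leavitt_ideal r s"
proof -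
  let ?v = "s (hd c)"
  have "fsub (poly_cycle s f c) (fmul (poly_cycle s f c) (gv ?v))
    = (\<lambda>w. \<Sum>i\<in>{0..degree f}. coeff f i * fsub (mono (Wf s c i)) (fmul (mono (Wf s c i)) (gv ?v)) w)"
    unfolding poly_lin fmul_lin_left by (rule ext) (simp add: fsub_def sum_subtractf right_diff_distrib)
  also have "\<dots> \<in> leavitt_ideal r s"
  proof (rule LI_lin, simp, rule ballI)
    fix i assume "i \<in> {0..degree f}"
    have "eqv r s (mono (Wf s c i) :: ('v,'e,'k) fel) (mono (Wf s c i @ [V ?v]))"
    proof (cases i)
      case 0
      then show ?thesis using eqv_sym[OF rel_VV[of r s ?v]] by (simp add: Wf_def)
    next
      case (Suc k)
      have me: "map Ed c = map Ed (butlast c) @ [Ed (last c)]"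
        using ne by (metis append_butlast_last_id list.simps(8,9) map_append)
      show ?thesis
        by (rule eqv_word[where p="concat (replicate k (map Ed c)) @ map Ed (butlast c)" and q="[]",
              OF _ _ eqv_sym[OF rel_Er[where e="last c"]]])
           (simp_all add: Wf_def Suc concat_rep_comm me[symmetric] cyc)
    qed
    then show "(fsub (mono (Wf s c i)) (fmul (mono (Wf s c i)) (gv ?v)) :: ('v,'e,'k) fel) \<in> leavitt_ideal r s"
      by (simp add: eqv_def fmul_mono)
  qed
  finally show ?thesis .
qed

lemma poly_left:
  fixes r s :: "'e \<Rightarrow> 'v" and g :: "'k::field poly"
  assumes ne: "d \<noteq> []"
  shows "fsub (poly_cycle s g d) (fmul (gv (s (hd d))) (poly_cycle s g d)) \<in> leavitt_ideal r s"
proof -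
  let ?u = "s (hd d)"
  have "fsub (poly_cycle s g d) (fmul (gv ?u) (poly_cycle s g d))
    = (\<lambda>w. \<Sum>i\<in>{0..degree g}. coeff g i * fsub (mono (Wf s d i)) (fmul (gv ?u) (mono (Wf s d i))) w)"
    unfolding poly_lin fmul_lin_right by (rule ext) (simp add: fsub_def sum_subtractf right_diff_distrib)
  also have "\<dots> \<in> leavitt_ideal r s"
  proof (rule LI_lin, simp, rule ballI)
    fix i assume "i \<in> {0..degree g}"
    have "eqv r s (mono (Wf s d i) :: ('v,'e,'k) fel) (mono ([V ?u] @ Wf s d i))"
    proof (cases i)
      case 0
      then show ?thesis using eqv_sym[OF rel_VV[of r s ?u]] by (simp add: Wf_def)
    next
      case (Suc k)
      have me: "map Ed d = [Ed (hd d)] @ map Ed (tl d)"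
        using ne by (cases d) auto
      show ?thesis
        by (rule eqv_word[where p="[]" and q="map Ed (tl d) @ concat (replicate k (map Ed d))",
              OF _ _ eqv_sym[OF rel_sE[where e="hd d"]]])
           (use me in \<open>simp_all add: Wf_def Suc\<close>)
    qed
    then show "(fsub (mono (Wf s d i)) (fmul (gv ?u) (mono (Wf s d i))) :: ('v,'e,'k) fel) \<in> leavitt_ideal r s"
      by (simp add: eqv_def fmul_mono)
  qed
  finally show ?thesis .
qed

theorem lemma2p2:
  fixes r s :: "'e \<Rightarrow> 'v" and c d :: "'e list" and f g :: "'k::field poly"
  assumes "is_cycle r s c" and "is_cycle r s d" and "set c \<noteq> set d"
    and "\<not> has_exit s c" and "\<not> has_exit s d"
    and "coeff f 0 \<noteq> 0" and "coeff g 0 \<noteq> 0"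
  shows "ideal_product (LPA r s)
           (gen_ideal (LPA r s) {lcls r s (poly_cycle s f c)})
           (gen_ideal (LPA r s) {lcls r s (poly_cycle s g d)})
         = {kzero (LPA r s)}"
proof -
  have cne: "c \<noteq> []" and dne: "d \<noteq> []" using assms(1,2) by (auto simp: is_cycle_def is_path_def)
  have cyc: "r (last c) = s (hd c)" using assms(1) by (simp add: is_cycle_def)
  have cS: "\<forall>e. s e \<in> s ` set c \<longrightarrow> r e \<in> s ` set c" by (rule cyc_closed[OF assms(1,4)])
  have cT: "\<forall>e. s e \<in> s ` set d \<longrightarrow> r e \<in> s ` set d" by (rule cyc_closed[OF assms(2,5)])
  have ST: "s ` set c \<inter> s ` set d = {}" by (rule cyc_disj[OF assms(1-5)])
  have v: "s (hd c) \<in> s ` set c" using cne by simp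
  have u: "s (hd d) \<in> s ` set d" using dne by simp
  show ?thesis
    by (rule abstract_main[OF K_lin[OF cS cT ST v u] K_0[OF cS cT ST v u]
          poly_fcar[where s=s and f=f, OF cne] poly_right[where r=r and s=s and f=f, OF cne cyc]
          poly_fcar[where s=s and f=g, OF dne] poly_left[where r=r and s=s and g=g, OF dne]])
qed

end
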